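(* Let $n\ge0$ and $k\ge1$ be integers and let $T$ be a completely non-unitary contraction on a separable infinite-dimensional complex Hilbert space $\mathcal{H}$ such that $\mathcal{D}_T\subseteq\mathcal{D}_{T^*}$, $\dim\mathcal{D}_{T^*}<\infty$, $\dim\mathcal{D}_T=n+1$ and $\dim(\mathcal{D}_{T^*}\ominus\mathcal{D}_T)=k$. Assume there is an orthonormal basis $\{e_m\}_{m\ge0}$ of $\mathcal{H}$ and scalars $a_{ij}$ ($0\le i\le n+k$, $0\le j\le n$) such that $Te_j=\sum_{i=0}^{n+k}a_{ij}e_i$ for $0\le j\le n$ and $Te_j=e_{j+k}$ for $j\ge n+1$. Let $A_1=(a_{ij})_{0\le i,j\le n}$. Then $T$ has no non-zero eigenvalue if and only if for every eigenvector $(h_0,\dots,h_n)\in\mathbb{C}^{n+1}$ of $A_1$ corresponding to a non-zero eigenvalue, there exists $l\in\{1,\dots,k\}$ with $\sum_{r=0}^{n}a_{n+l,r}h_r\neq 0$.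
   Context: For a contraction $T$ on $\mathcal{H}$, $\mathcal{D}_T=\overline{(I-T^*T)^{1/2}\mathcal{H}}$ and $\mathcal{D}_{T^*}=\overline{(I-TT^* )^{1/2}\mathcal{H}}$. A contraction is completely non-unitary if it has no nonzero reducing subspace on which it is unitary. *)

theory Defs
  imports Complex_Main
begin

text \<open>The Hilbert space: l2(N) of square-summable complex sequences,
  modelled as a set of functions nat => complex.\<close>

type_synonym vec = "nat \<Rightarrow> complex"
type_synonym op = "vec \<Rightarrow> vec"

definition l2 :: "vec set" where
  "l2 = {x. summable (\<lambda>i. (cmod (x i))\<^sup>2)}"

definition l2inner :: "vec \<Rightarrow> vec \<Rightarrow> complex" where
  "l2inner x y = (\<Sum>i. x i * cnj (y i))"

definition l2norm :: "vec \<Rightarrow> real" where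
  "l2norm x = sqrt (\<Sum>i. (cmod (x i))\<^sup>2)"

definition vadd :: "vec \<Rightarrow> vec \<Rightarrow> vec" where
  "vadd x y = (\<lambda>i. x i + y i)"

definition vsub :: "vec \<Rightarrow> vec \<Rightarrow> vec" where
  "vsub x y = (\<lambda>i. x i - y i)"

definition vscale :: "complex \<Rightarrow> vec \<Rightarrow> vec" where
  "vscale c x = (\<lambda>i. c * x i)"

definition vzero :: vec where
  "vzero = (\<lambda>i. 0)"

definition l2closure :: "vec set \<Rightarrow> vec set" where
  "l2closure S = {x \<in> l2. \<forall>\<epsilon>>0. \<exists>y\<in>S. l2norm (vsub x y) < \<epsilon>}"

definition subspace_l2 :: "vec set \<Rightarrow> bool" where
  "subspace_l2 M \<longleftrightarrow> M \<subseteq> l2 \<and> vzero \<in> M \<and>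
     (\<forall>x\<in>M. \<forall>y\<in>M. vadd x y \<in> M) \<and> (\<forall>c. \<forall>x\<in>M. vscale c x \<in> M)"

definition closed_subspace_l2 :: "vec set \<Rightarrow> bool" where
  "closed_subspace_l2 M \<longleftrightarrow> subspace_l2 M \<and> l2closure M = M"

text \<open>Bounded linear operators on l2 (only their values on l2 matter).\<close>
definition bounded_linear_l2 :: "op \<Rightarrow> bool" where
  "bounded_linear_l2 T \<longleftrightarrow>
     (\<forall>x\<in>l2. T x \<in> l2) \<and>
     (\<forall>x\<in>l2. \<forall>y\<in>l2. T (vadd x y) = vadd (T x) (T y)) \<and>
     (\<forall>c. \<forall>x\<in>l2. T (vscale c x) = vscale c (T x)) \<and>
     (\<exists>C. \<forall>x\<in>l2. l2norm (T x) \<le> C * l2norm x)"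

definition is_adjoint :: "op \<Rightarrow> op \<Rightarrow> bool" where
  "is_adjoint T S \<longleftrightarrow> bounded_linear_l2 S \<and>
     (\<forall>x\<in>l2. \<forall>y\<in>l2. l2inner (T x) y = l2inner x (S y))"

definition adj :: "op \<Rightarrow> op" where
  "adj T = (SOME S. is_adjoint T S)"

definition contraction :: "op \<Rightarrow> bool" where
  "contraction T \<longleftrightarrow> bounded_linear_l2 T \<and> (\<forall>x\<in>l2. l2norm (T x) \<le> l2norm x)"

definition positive_op :: "op \<Rightarrow> bool" where
  "positive_op S \<longleftrightarrow> bounded_linear_l2 S \<and>
     (\<forall>x\<in>l2. Im (l2inner (S x) x) = 0 \<and> Re (l2inner (S x) x) \<ge> 0)"

definition op_sqrt :: "op \<Rightarrow> op" where
  "op_sqrt A = (SOME S. positive_op S \<and> (\<forall>x\<in>l2. S (S x) = A x))"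

definition defect_space :: "op \<Rightarrow> vec set" where
  "defect_space T = l2closure (op_sqrt (\<lambda>x. vsub x (adj T (T x))) ` l2)"

definition defect_space_star :: "op \<Rightarrow> vec set" where
  "defect_space_star T = l2closure (op_sqrt (\<lambda>x. vsub x (T (adj T x))) ` l2)"

definition ominus :: "vec set \<Rightarrow> vec set \<Rightarrow> vec set" where
  "ominus M N = {x \<in> M. \<forall>y\<in>N. l2inner x y = 0}"

definition has_dim :: "vec set \<Rightarrow> nat \<Rightarrow> bool" where
  "has_dim V d \<longleftrightarrow> (\<exists>b :: nat \<Rightarrow> vec.
      (\<forall>c :: nat \<Rightarrow> complex. (\<lambda>m. \<Sum>i<d. c i * b i m) = vzero \<longrightarrow> (\<forall>i<d. c i = 0)) \<and>
      V = {(\<lambda>m. \<Sum>i<d. c i * b i m) | c. True})"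

definition finite_dim :: "vec set \<Rightarrow> bool" where
  "finite_dim V \<longleftrightarrow> (\<exists>d. has_dim V d)"

definition reducing :: "op \<Rightarrow> vec set \<Rightarrow> bool" where
  "reducing T M \<longleftrightarrow> closed_subspace_l2 M \<and> T ` M \<subseteq> M \<and> adj T ` M \<subseteq> M"

definition unitary_on :: "op \<Rightarrow> vec set \<Rightarrow> bool" where
  "unitary_on T M \<longleftrightarrow> (\<forall>x\<in>M. l2norm (T x) = l2norm x) \<and> T ` M = M"

definition cnu :: "op \<Rightarrow> bool" where
  "cnu T \<longleftrightarrow> \<not> (\<exists>M. reducing T M \<and> M \<noteq> {vzero} \<and> unitary_on T M)"

definition l2span :: "(nat \<Rightarrow> vec) \<Rightarrow> vec set" where
  "l2span e = {(\<lambda>m. \<Sum>i\<in>F. c i * e i m) | F c. finite F}"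

definition orthonormal_basis :: "(nat \<Rightarrow> vec) \<Rightarrow> bool" where
  "orthonormal_basis e \<longleftrightarrow> (\<forall>i. e i \<in> l2) \<and>
     (\<forall>i j. l2inner (e i) (e j) = (if i = j then 1 else 0)) \<and>
     l2closure (l2span e) = l2"

definition has_eigenvalue :: "op \<Rightarrow> complex \<Rightarrow> bool" where
  "has_eigenvalue T c \<longleftrightarrow> (\<exists>x\<in>l2. x \<noteq> vzero \<and> T x = vscale c x)"

end

theory Submission imports Defs "HOL-Analysis.L2_Norm" begin

lemma l2_iff: "x \<in> l2 \<longleftrightarrow> summable (\<lambda>i. (cmod (x i))\<^sup>2)"
  by (simp add: l2_def)

lemma sq_add_le: "(cmod (a + b))\<^sup>2 \<le> 2 * (cmod a)\<^sup>2 + 2 * (cmod b)\<^sup>2"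
proof -
  have "cmod (a + b) \<le> cmod a + cmod b" by (rule norm_triangle_ineq)
  hence "(cmod (a + b))\<^sup>2 \<le> (cmod a + cmod b)\<^sup>2" by (simp add: power_mono)
  also have "\<dots> \<le> 2 * (cmod a)\<^sup>2 + 2 * (cmod b)\<^sup>2"
  proof -
    have "0 \<le> (cmod a - cmod b)\<^sup>2" by simp
    thus ?thesis unfolding power2_diff power2_sum by linarith
  qed
  finally show ?thesis .
qed

lemma l2_vadd: "x \<in> l2 \<Longrightarrow> y \<in> l2 \<Longrightarrow> vadd x y \<in> l2"
  unfolding l2_iff vadd_def
  by (rule summable_comparison_test'[where g="\<lambda>i. 2 * (cmod (x i))\<^sup>2 + 2 * (cmod (y i))\<^sup>2" and N=0])
     (auto intro: summable_add summable_mult sq_add_le)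

lemma l2_vscale: "x \<in> l2 \<Longrightarrow> vscale c x \<in> l2"
  unfolding l2_iff vscale_def
  by (simp add: norm_mult power_mult_distrib summable_mult)

lemma l2_vzero: "vzero \<in> l2"
  by (simp add: l2_iff vzero_def)

lemma vsub_eq: "vsub x y = vadd x (vscale (-1) y)"
  by (simp add: vsub_def vadd_def vscale_def)

lemma l2_vsub: "x \<in> l2 \<Longrightarrow> y \<in> l2 \<Longrightarrow> vsub x y \<in> l2"
  by (simp add: vsub_eq l2_vadd l2_vscale)

lemma l2_sum: "finite F \<Longrightarrow> (\<And>i. i \<in> F \<Longrightarrow> v i \<in> l2) \<Longrightarrow> (\<lambda>m. \<Sum>i\<in>F. c i * v i m) \<in> l2"
proof (induction F rule: finite_induct)
  case empty then show ?case using l2_vzero by (simp add: vzero_def)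
next
  case (insert a F)
  have "(\<lambda>m. \<Sum>i\<in>insert a F. c i * v i m) = vadd (vscale (c a) (v a)) (\<lambda>m. \<Sum>i\<in>F. c i * v i m)"
    using insert(1,2) unfolding vadd_def vscale_def by (intro ext) simp
  moreover have "vadd (vscale (c a) (v a)) (\<lambda>m. \<Sum>i\<in>F. c i * v i m) \<in> l2"
    using insert(3,4) by (intro l2_vadd l2_vscale) auto
  ultimately show ?case by simp
qed


lemma prod_le: "cmod (x * cnj y) \<le> ((cmod x)\<^sup>2 + (cmod y)\<^sup>2) / 2"
proof -
  have "0 \<le> (cmod x - cmod y)\<^sup>2" by simp
  thus ?thesis by (simp add: norm_mult power2_diff)
qed

lemma inner_summable_abs: assumes "x \<in> l2" "y \<in> l2" shows "summable (\<lambda>i. cmod (x i * cnj (y i)))"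
proof (rule summable_comparison_test'[where g="\<lambda>i. ((cmod (x i))\<^sup>2 + (cmod (y i))\<^sup>2) / 2" and N=0])
  show "summable (\<lambda>i. ((cmod (x i))\<^sup>2 + (cmod (y i))\<^sup>2) / 2)"
    using assms unfolding l2_iff by (intro summable_divide summable_add)
  show "norm (cmod (x n * cnj (y n))) \<le> ((cmod (x n))\<^sup>2 + (cmod (y n))\<^sup>2) / 2" for n
    using prod_le[of "x n" "y n"] by simp
qed

lemma inner_summable: "x \<in> l2 \<Longrightarrow> y \<in> l2 \<Longrightarrow> summable (\<lambda>i. x i * cnj (y i))"
  by (rule summable_norm_cancel) (rule inner_summable_abs)


lemma inner_sum_left:
  assumes "finite F" "\<And>i. i \<in> F \<Longrightarrow> v i \<in> l2" "z \<in> l2"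
  shows "l2inner (\<lambda>m. \<Sum>i\<in>F. c i * v i m) z = (\<Sum>i\<in>F. c i * l2inner (v i) z)"
proof -
  have "l2inner (\<lambda>m. \<Sum>i\<in>F. c i * v i m) z = (\<Sum>m. \<Sum>i\<in>F. c i * (v i m * cnj (z m)))"
    unfolding l2inner_def by (simp add: sum_distrib_right mult.assoc)
  also have "\<dots> = (\<Sum>i\<in>F. \<Sum>m. c i * (v i m * cnj (z m)))"
    by (rule suminf_sum) (use assms inner_summable summable_mult in blast)
  also have "\<dots> = (\<Sum>i\<in>F. c i * l2inner (v i) z)"
    unfolding l2inner_def using assms inner_summable by (intro sum.cong refl suminf_mult) blast
  finally show ?thesis .
qed

lemma inner_sum_right:
  assumes "finite F" "\<And>i. i \<in> F \<Longrightarrow> v i \<in> l2" "z \<in> l2"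
  shows "l2inner z (\<lambda>m. \<Sum>i\<in>F. c i * v i m) = (\<Sum>i\<in>F. cnj (c i) * l2inner z (v i))"
proof -
  have "l2inner z (\<lambda>m. \<Sum>i\<in>F. c i * v i m) = (\<Sum>m. \<Sum>i\<in>F. cnj (c i) * (z m * cnj (v i m)))"
    unfolding l2inner_def by (simp add: sum_distrib_left mult.assoc mult.left_commute)
  also have "\<dots> = (\<Sum>i\<in>F. \<Sum>m. cnj (c i) * (z m * cnj (v i m)))"
    by (rule suminf_sum) (use assms inner_summable summable_mult in blast)
  also have "\<dots> = (\<Sum>i\<in>F. cnj (c i) * l2inner z (v i))"
    unfolding l2inner_def using assms inner_summable by (intro sum.cong refl suminf_mult) blast
  finally show ?thesis .
qed

lemma inner_add_left: assumes "x \<in> l2" "y \<in> l2" "z \<in> l2" shows "l2inner (vadd x y) z = l2inner x z + l2inner y z"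
proof -
  have "l2inner (vadd x y) z = (\<Sum>i. x i * cnj (z i) + y i * cnj (z i))"
    unfolding l2inner_def vadd_def by (simp add: distrib_right)
  also have "\<dots> = l2inner x z + l2inner y z"
    unfolding l2inner_def by (rule suminf_add[symmetric]) (use assms inner_summable in auto)
  finally show ?thesis .
qed


lemma inner_scale_left: assumes "x \<in> l2" "z \<in> l2" shows "l2inner (vscale c x) z = c * l2inner x z"
proof -
  have "l2inner (vscale c x) z = (\<Sum>i. c * (x i * cnj (z i)))"
    unfolding l2inner_def vscale_def by (simp add: mult.assoc)
  also have "\<dots> = c * l2inner x z"
    unfolding l2inner_def by (rule suminf_mult) (use assms inner_summable in auto)
  finally show ?thesis .
qed


lemma inner_add_right: assumes "x \<in> l2" "y \<in> l2" "z \<in> l2" shows "l2inner z (vadd x y) = l2inner z x + l2inner z y"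
proof -
  have "l2inner z (vadd x y) = (\<Sum>i. z i * cnj (x i) + z i * cnj (y i))"
    unfolding l2inner_def vadd_def by (simp add: distrib_left)
  also have "\<dots> = l2inner z x + l2inner z y"
    unfolding l2inner_def by (rule suminf_add[symmetric]) (use assms inner_summable in auto)
  finally show ?thesis .
qed


lemma inner_scale_right: assumes "x \<in> l2" "z \<in> l2" shows "l2inner z (vscale c x) = cnj c * l2inner z x"
proof -
  have "l2inner z (vscale c x) = (\<Sum>i. cnj c * (z i * cnj (x i)))"
    unfolding l2inner_def vscale_def by (simp add: mult.assoc mult.left_commute)
  also have "\<dots> = cnj c * l2inner z x"
    unfolding l2inner_def by (rule suminf_mult) (use assms inner_summable in auto)
  finally show ?thesis .
qed


lemma inner_cnj: "x \<in> l2 \<Longrightarrow> y \<in> l2 \<Longrightarrow> l2inner y x = cnj (l2inner x y)"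
proof -
  assume a: "x \<in> l2" "y \<in> l2"
  have "(\<lambda>i. x i * cnj (y i)) sums l2inner x y"
    unfolding l2inner_def using inner_summable[OF a] by (rule summable_sums)
  hence "(\<lambda>i. cnj (x i * cnj (y i))) sums cnj (l2inner x y)" by (simp only: sums_cnj)
  hence "(\<lambda>i. y i * cnj (x i)) sums cnj (l2inner x y)" by (simp add: mult.commute)
  thus ?thesis unfolding l2inner_def by (rule sums_unique[symmetric])
qed

lemma normsq: assumes "x \<in> l2" shows "(l2norm x)\<^sup>2 = (\<Sum>i. (cmod (x i))\<^sup>2)"
proof -
  have "0 \<le> (\<Sum>i. (cmod (x i))\<^sup>2)" using assms unfolding l2_iff by (rule suminf_nonneg) simp
  thus ?thesis unfolding l2norm_def by simp
qed


lemma inner_self: assumes a: "x \<in> l2" shows "l2inner x x = complex_of_real ((l2norm x)\<^sup>2)"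
proof -
  have "l2inner x x = (\<Sum>i. complex_of_real ((cmod (x i))\<^sup>2))"
    unfolding l2inner_def by (simp only: complex_norm_square)
  also have "\<dots> = complex_of_real (\<Sum>i. (cmod (x i))\<^sup>2)"
    using a unfolding l2_iff by (rule suminf_of_real[symmetric])
  finally show ?thesis using normsq[OF a] by simp
qed


lemma l2norm_nonneg: assumes "x \<in> l2" shows "0 \<le> l2norm x"
  using normsq[OF assms] assms unfolding l2norm_def l2_iff by (simp add: suminf_nonneg)

lemma cs: assumes "x \<in> l2" "y \<in> l2" shows "cmod (l2inner x y) \<le> l2norm x * l2norm y"
proof -
  have s: "summable (\<lambda>i. cmod (x i * cnj (y i)))" using inner_summable_abs assms by blast
  have "cmod (l2inner x y) \<le> (\<Sum>i. cmod (x i * cnj (y i)))"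
    unfolding l2inner_def using s by (rule summable_norm)
  also have "\<dots> \<le> l2norm x * l2norm y"
  proof (rule suminf_le_const[OF s])
    fix N
    have "(\<Sum>i\<in>{..<N}. cmod (x i * cnj (y i))) = (\<Sum>i\<in>{..<N}. \<bar>cmod (x i)\<bar> * \<bar>cmod (y i)\<bar>)"
      by (simp add: norm_mult)
    also have "\<dots> \<le> L2_set (\<lambda>i. cmod (x i)) {..<N} * L2_set (\<lambda>i. cmod (y i)) {..<N}"
      by (rule L2_set_mult_ineq)
    also have "\<dots> \<le> l2norm x * l2norm y"
      unfolding L2_set_def l2norm_def
      using assms unfolding l2_iff
      by (intro mult_mono real_sqrt_le_mono sum_le_suminf) (auto intro: suminf_nonneg sum_nonneg)
    finally show "(\<Sum>i<N. cmod (x i * cnj (y i))) \<le> l2norm x * l2norm y" .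
  qed
  finally show ?thesis .
qed

lemma l2norm_zero: "x \<in> l2 \<Longrightarrow> l2norm x = 0 \<Longrightarrow> x = vzero"
proof -
  assume a: "x \<in> l2" "l2norm x = 0"
  hence "(\<Sum>i. (cmod (x i))\<^sup>2) = 0" using normsq[OF a(1)] by simp
  hence "\<forall>i. (cmod (x i))\<^sup>2 = 0" using a(1) unfolding l2_iff by (subst (asm) suminf_eq_zero_iff) auto
  thus ?thesis by (auto simp: vzero_def)
qed

lemma l2norm_scale: "x \<in> l2 \<Longrightarrow> l2norm (vscale c x) = cmod c * l2norm x"
  unfolding l2norm_def vscale_def l2_iff
  by (simp add: norm_mult power_mult_distrib suminf_mult real_sqrt_mult)

lemma onb_norm: "orthonormal_basis e \<Longrightarrow> l2norm (e i) = 1"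
proof -
  assume o: "orthonormal_basis e"
  hence "e i \<in> l2" "l2inner (e i) (e i) = 1" by (auto simp: orthonormal_basis_def)
  hence "(l2norm (e i))\<^sup>2 = 1" using inner_self by (metis of_real_eq_1_iff)
  thus ?thesis using l2norm_nonneg[of "e i"] \<open>e i \<in> l2\<close> by (auto simp: power2_eq_1_iff)
qed


lemma vzero_scale: "vscale 0 vzero = vzero" by (simp add: vscale_def vzero_def)

lemma op_vzero: assumes "bounded_linear_l2 T" shows "T vzero = vzero"
proof -
  have "T vzero = T (vscale 0 vzero)" by (simp add: vzero_scale)
  also have "\<dots> = vscale 0 (T vzero)" using assms l2_vzero unfolding bounded_linear_l2_def by blast
  also have "\<dots> = vzero" by (simp add: vscale_def vzero_def)
  finally show ?thesis .
qed

lemma op_sum: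
  assumes "bounded_linear_l2 T"
  shows "finite F \<Longrightarrow> (\<And>i. i \<in> F \<Longrightarrow> v i \<in> l2) \<Longrightarrow> T (\<lambda>m. \<Sum>i\<in>F. c i * v i m) = (\<lambda>m. \<Sum>i\<in>F. c i * T (v i) m)"
proof (induction F rule: finite_induct)
  case empty then show ?case using op_vzero[OF assms] by (simp add: vzero_def)
next
  case (insert a F)
  have eq: "(\<lambda>m. \<Sum>i\<in>insert a F. c i * v i m) = vadd (vscale (c a) (v a)) (\<lambda>m. \<Sum>i\<in>F. c i * v i m)"
    using insert(1,2) unfolding vadd_def vscale_def by (intro ext) simp
  have l: "vscale (c a) (v a) \<in> l2" "(\<lambda>m. \<Sum>i\<in>F. c i * v i m) \<in> l2" "v a \<in> l2"
    using insert(1,4) by (auto intro: l2_vscale l2_sum)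
  have "T (\<lambda>m. \<Sum>i\<in>insert a F. c i * v i m) = vadd (T (vscale (c a) (v a))) (T (\<lambda>m. \<Sum>i\<in>F. c i * v i m))"
    unfolding eq using assms l unfolding bounded_linear_l2_def by blast
  also have "\<dots> = vadd (vscale (c a) (T (v a))) (\<lambda>m. \<Sum>i\<in>F. c i * T (v i) m)"
    using assms l insert unfolding bounded_linear_l2_def by auto
  also have "\<dots> = (\<lambda>m. \<Sum>i\<in>insert a F. c i * T (v i) m)"
    using insert(1,2) unfolding vadd_def vscale_def by (intro ext) simp
  finally show ?case .
qed

lemma vadd_vsub: "vadd (vsub x y) y = x" by (simp add: vadd_def vsub_def)

lemma dens:
  assumes onb: "orthonormal_basis e"
    and add: "\<And>x y. x \<in> l2 \<Longrightarrow> y \<in> l2 \<Longrightarrow> F (vadd x y) = F x + F y"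
    and scl: "\<And>c x. x \<in> l2 \<Longrightarrow> F (vscale c x) = c * F x"
    and bnd: "\<And>x. x \<in> l2 \<Longrightarrow> cmod (F x) \<le> C * l2norm x"
    and zero: "\<And>j. F (e j) = 0"
    and x: "x \<in> l2"
  shows "F x = 0"
proof (rule ccontr)
  assume nz: "F x \<noteq> 0"
  have el: "\<And>i. e i \<in> l2" using onb by (simp add: orthonormal_basis_def)
  have C0: "0 \<le> C" using bnd[OF el[of 0]] onb_norm[OF onb, of 0] zero[of 0] by simp
  have span0: "F (\<lambda>m. \<Sum>i\<in>G. c i * e i m) = 0" if "finite G" for G c
    using that
  proof (induction G rule: finite_induct)
    case empty
    have "F vzero = F (vscale 0 vzero)" by (simp add: vzero_scale)
    also have "\<dots> = 0" using scl[OF l2_vzero] by simp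
    finally show ?case by (simp add: vzero_def)
  next
    case (insert a G)
    have eq: "(\<lambda>m. \<Sum>i\<in>insert a G. c i * e i m) = vadd (vscale (c a) (e a)) (\<lambda>m. \<Sum>i\<in>G. c i * e i m)"
      using insert(1,2) unfolding vadd_def vscale_def by (intro ext) simp
    show ?case unfolding eq
      by (subst add) (auto intro: l2_vscale l2_sum el simp: scl el zero insert.IH insert.hyps)
  qed
  define \<epsilon> where "\<epsilon> = cmod (F x) / (C + 1)"
  have \<epsilon>0: "\<epsilon> > 0" using nz C0 by (simp add: \<epsilon>_def)
  have "x \<in> l2closure (l2span e)" using onb x by (simp add: orthonormal_basis_def)
  then obtain y where y: "y \<in> l2span e" "l2norm (vsub x y) < \<epsilon>"
    unfolding l2closure_def using \<epsilon>0 by blast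
  then obtain G c where G: "finite G" "y = (\<lambda>m. \<Sum>i\<in>G. c i * e i m)" unfolding l2span_def by blast
  have yl: "y \<in> l2" using G by (simp add: l2_sum el)
  have "F x = F (vadd (vsub x y) y)" by (simp add: vadd_vsub)
  also have "\<dots> = F (vsub x y)" using add[OF l2_vsub[OF x yl] yl] span0 G by simp
  finally have "cmod (F x) \<le> C * l2norm (vsub x y)" using bnd[OF l2_vsub[OF x yl]] by simp
  also have "\<dots> \<le> C * \<epsilon>" using y(2) C0 by (simp add: mult_left_mono)
  also have "\<dots> < cmod (F x)" using nz C0 unfolding \<epsilon>_def by (simp add: field_simps)
  finally show False by simp
qed


lemma coord:
  assumes ct: "contraction T" and onb: "orthonormal_basis e" and S: "finite S"
    and hyp: "\<And>j. l2inner (T (e j)) (e m) = (\<Sum>j'\<in>S. w j' * l2inner (e j) (e j'))"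
    and x: "x \<in> l2"
  shows "l2inner (T x) (e m) = (\<Sum>j'\<in>S. w j' * l2inner x (e j'))"
proof -
  have el: "\<And>i. e i \<in> l2" using onb by (simp add: orthonormal_basis_def)
  have bl: "bounded_linear_l2 T" and cn: "\<And>z. z \<in> l2 \<Longrightarrow> l2norm (T z) \<le> l2norm z"
    using ct by (auto simp: contraction_def)
  have Tl: "\<And>z. z \<in> l2 \<Longrightarrow> T z \<in> l2" using bl by (simp add: bounded_linear_l2_def)
  have Tadd: "\<And>x y. x \<in> l2 \<Longrightarrow> y \<in> l2 \<Longrightarrow> T (vadd x y) = vadd (T x) (T y)"
    and Tscl: "\<And>c x. x \<in> l2 \<Longrightarrow> T (vscale c x) = vscale c (T x)"
    using bl by (auto simp: bounded_linear_l2_def)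
  define F where "F z = l2inner (T z) (e m) - (\<Sum>j'\<in>S. w j' * l2inner z (e j'))" for z
  have "F x = 0"
  proof (rule dens[OF onb, where F=F and C="1 + (\<Sum>j'\<in>S. cmod (w j'))"])
    show "F (vadd y z) = F y + F z" if "y \<in> l2" "z \<in> l2" for y z
      using that unfolding F_def
      by (simp add: Tadd Tl inner_add_left el distrib_left sum.distrib)
    show "F (vscale c y) = c * F y" if "y \<in> l2" for c y
      using that unfolding F_def
      by (simp add: Tscl Tl inner_scale_left el right_diff_distrib sum_distrib_left mult.left_commute)
    show "cmod (F z) \<le> (1 + (\<Sum>j'\<in>S. cmod (w j'))) * l2norm z" if z: "z \<in> l2" for z
    proof -
      have "cmod (F z) \<le> cmod (l2inner (T z) (e m)) + cmod (\<Sum>j'\<in>S. w j' * l2inner z (e j'))"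
        unfolding F_def by (rule norm_triangle_ineq4)
      also have "\<dots> \<le> l2norm z + (\<Sum>j'\<in>S. cmod (w j') * l2norm z)"
      proof (rule add_mono)
        have "cmod (l2inner (T z) (e m)) \<le> l2norm (T z) * l2norm (e m)" using cs Tl z el by blast
        thus "cmod (l2inner (T z) (e m)) \<le> l2norm z" using onb_norm[OF onb] cn[OF z] by simp
        have "cmod (\<Sum>j'\<in>S. w j' * l2inner z (e j')) \<le> (\<Sum>j'\<in>S. cmod (w j' * l2inner z (e j')))"
          by (rule norm_sum)
        also have "\<dots> \<le> (\<Sum>j'\<in>S. cmod (w j') * l2norm z)"
        proof (rule sum_mono)
          fix j' have "cmod (l2inner z (e j')) \<le> l2norm z * l2norm (e j')" using cs z el by blast
          thus "cmod (w j' * l2inner z (e j')) \<le> cmod (w j') * l2norm z"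
            using onb_norm[OF onb] by (simp add: norm_mult mult_left_mono)
        qed
        finally show "cmod (\<Sum>j'\<in>S. w j' * l2inner z (e j')) \<le> (\<Sum>j'\<in>S. cmod (w j') * l2norm z)" .
      qed
      also have "\<dots> = (1 + (\<Sum>j'\<in>S. cmod (w j'))) * l2norm z"
        by (simp add: distrib_right sum_distrib_right)
      finally show ?thesis .
    qed
    show "F (e j) = 0" for j using hyp[of j] unfolding F_def by simp
    show "x \<in> l2" by (rule x)
  qed
  thus ?thesis unfolding F_def by simp
qed

lemma complete0:
  assumes onb: "orthonormal_basis e" and x: "x \<in> l2" and z: "\<And>j. l2inner x (e j) = 0"
  shows "x = vzero"
proof -
  have el: "\<And>i. e i \<in> l2" using onb by (simp add: orthonormal_basis_def)
  have "l2inner x x = 0"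
  proof (rule dens[OF onb, where F="\<lambda>y. l2inner y x" and C="l2norm x"])
    show "l2inner (vadd y z) x = l2inner y x + l2inner z x" if "y \<in> l2" "z \<in> l2" for y z
      using that x by (simp add: inner_add_left)
    show "l2inner (vscale c y) x = c * l2inner y x" if "y \<in> l2" for c y
      using that x by (simp add: inner_scale_left)
    show "cmod (l2inner y x) \<le> l2norm x * l2norm y" if "y \<in> l2" for y
      using cs[OF that x] by (simp add: mult.commute)
    show "l2inner (e j) x = 0" for j using inner_cnj[OF x el] z by simp
  qed (rule x)
  hence "l2norm x = 0" using inner_self[OF x] by simp
  thus ?thesis using l2norm_zero x by blast
qed


lemma bessel:
  assumes onb: "orthonormal_basis e" and x: "x \<in> l2" and G: "finite G"
  shows "(\<Sum>m\<in>G. (cmod (l2inner x (e m)))\<^sup>2) \<le> (l2norm x)\<^sup>2"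
proof -
  have el: "\<And>i. e i \<in> l2" using onb by (simp add: orthonormal_basis_def)
  have orth: "\<And>i j. l2inner (e i) (e j) = (if i = j then 1 else 0)" using onb by (simp add: orthonormal_basis_def)
  define c where "c m = l2inner x (e m)" for m
  define y where "y = (\<lambda>i. \<Sum>m\<in>G. c m * e m i)"
  define S where "S = (\<Sum>m\<in>G. (cmod (c m))\<^sup>2)"
  have yl: "y \<in> l2" unfolding y_def using G el by (simp add: l2_sum)
  have cc: "c m * cnj (c m) = complex_of_real ((cmod (c m))\<^sup>2)" for m
    by (simp only: complex_norm_square)
  have "l2inner x y = (\<Sum>m\<in>G. cnj (c m) * c m)"
    unfolding y_def using G el x by (simp add: inner_sum_right c_def)
  also have "\<dots> = complex_of_real S" unfolding S_def using cc by (simp add: mult.commute)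
  finally have xy: "l2inner x y = complex_of_real S" .
  have ey: "l2inner (e m) y = cnj (c m)" if "m \<in> G" for m
    unfolding y_def using G el that by (simp add: inner_sum_right orth if_distrib cong: if_cong)
  have "l2inner y y = (\<Sum>m\<in>G. c m * l2inner (e m) y)"
    using inner_sum_left[OF G, of e y c] el yl unfolding y_def by simp
  also have "\<dots> = (\<Sum>m\<in>G. c m * cnj (c m))" using ey by simp
  also have "\<dots> = complex_of_real S" unfolding S_def using cc by simp
  finally have "complex_of_real ((l2norm y)\<^sup>2) = complex_of_real S" using inner_self[OF yl] by simp
  hence yS: "(l2norm y)\<^sup>2 = S" using of_real_eq_iff by blast
  have S0: "0 \<le> S" unfolding S_def by (simp add: sum_nonneg)
  have "S \<le> l2norm x * l2norm y" using cs[OF x yl] xy S0 by simp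
  hence "l2norm y * l2norm y \<le> l2norm x * l2norm y" using yS by (simp add: power2_eq_square)
  hence "l2norm y \<le> l2norm x" using l2norm_nonneg[OF yl] l2norm_nonneg[OF x]
    by (metis mult_right_le_imp_le less_eq_real_def)
  hence "(l2norm y)\<^sup>2 \<le> (l2norm x)\<^sup>2" using l2norm_nonneg[OF yl] by (simp add: power_mono)
  thus ?thesis using yS unfolding S_def c_def by simp
qed


theorem lemma4p1:
  fixes n k :: nat and T :: op and e :: "nat \<Rightarrow> vec" and a :: "nat \<Rightarrow> nat \<Rightarrow> complex"
  assumes "k \<ge> 1"
    and "contraction T" and "cnu T"
    and "defect_space T \<subseteq> defect_space_star T"
    and "finite_dim (defect_space_star T)"
    and "has_dim (defect_space T) (n + 1)"
    and "has_dim (ominus (defect_space_star T) (defect_space T)) k"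
    and "orthonormal_basis e"
    and "\<forall>j\<le>n. T (e j) = (\<lambda>m. \<Sum>i\<le>n + k. a i j * e i m)"
    and "\<forall>j\<ge>n + 1. T (e j) = e (j + k)"
  shows "(\<forall>c. c \<noteq> 0 \<longrightarrow> \<not> has_eigenvalue T c) \<longleftrightarrow>
    (\<forall>h :: nat \<Rightarrow> complex. \<forall>\<mu>. \<mu> \<noteq> 0 \<and> (\<exists>r\<le>n. h r \<noteq> 0) \<and>
        (\<forall>i\<le>n. (\<Sum>r\<le>n. a i r * h r) = \<mu> * h i)
      \<longrightarrow> (\<exists>l\<in>{1..k}. (\<Sum>r\<le>n. a (n + l) r * h r) \<noteq> 0))"
proof -
  note k1 = assms(1) and ct = assms(2) and onb = assms(8) and Te1 = assms(9) and Te2 = assms(10)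
  have el: "\<And>i. e i \<in> l2" using onb by (simp add: orthonormal_basis_def)
  have orth: "\<And>i j. l2inner (e i) (e j) = (if i = j then 1 else 0)" using onb by (simp add: orthonormal_basis_def)
  have bl: "bounded_linear_l2 T" and cn: "\<And>z. z \<in> l2 \<Longrightarrow> l2norm (T z) \<le> l2norm z"
    using ct by (auto simp: contraction_def)
  have Tscl: "\<And>c x. x \<in> l2 \<Longrightarrow> T (vscale c x) = vscale c (T x)"
    using bl by (auto simp: bounded_linear_l2_def)
  have Tl: "\<And>z. z \<in> l2 \<Longrightarrow> T z \<in> l2" using bl by (simp add: bounded_linear_l2_def)
  have TA: "l2inner (T x) (e m) = (\<Sum>j\<le>n. a m j * l2inner x (e j))" if x: "x \<in> l2" and m: "m \<le> n + k" for x m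
  proof (rule coord[OF ct onb _ _ x])
    show "finite {..n}" by simp
    show "l2inner (T (e j)) (e m) = (\<Sum>j'\<le>n. a m j' * l2inner (e j) (e j'))" for j
    proof (cases "j \<le> n")
      case True
      have "l2inner (T (e j)) (e m) = (\<Sum>i\<le>n + k. a i j * l2inner (e i) (e m))"
        using Te1 True el by (simp add: inner_sum_left)
      also have "\<dots> = a m j" using m by (simp add: orth if_distrib cong: if_cong)
      finally show ?thesis using True by (simp add: orth if_distrib cong: if_cong)
    next
      case False
      hence "l2inner (T (e j)) (e m) = 0" using Te2 m by (simp add: orth)
      thus ?thesis using False by (simp add: orth if_distrib cong: if_cong)
    qed
  qed
  have TB: "l2inner (T x) (e m) = l2inner x (e (m - k))" if x: "x \<in> l2" and m: "m \<ge> n + k + 1" for x m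
  proof -
    have "l2inner (T x) (e m) = (\<Sum>j'\<in>{m - k}. 1 * l2inner x (e j'))"
    proof (rule coord[OF ct onb _ _ x])
      show "finite {m - k}" by simp
      show "l2inner (T (e j)) (e m) = (\<Sum>j'\<in>{m - k}. 1 * l2inner (e j) (e j'))" for j
      proof (cases "j \<le> n")
        case True
        have "l2inner (T (e j)) (e m) = (\<Sum>i\<le>n + k. a i j * l2inner (e i) (e m))"
          using Te1 True el by (simp add: inner_sum_left)
        also have "\<dots> = 0" using m by (simp add: orth if_distrib cong: if_cong)
        finally show ?thesis using True m by (simp add: orth)
      next
        case False
        thus ?thesis using Te2 m by (auto simp: orth)
      qed
    qed
    thus ?thesis by simp
  qed
  show ?thesis
  proof
    assume noeig: "\<forall>c. c \<noteq> 0 \<longrightarrow> \<not> has_eigenvalue T c"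
    show "\<forall>h :: nat \<Rightarrow> complex. \<forall>\<mu>. \<mu> \<noteq> 0 \<and> (\<exists>r\<le>n. h r \<noteq> 0) \<and>
        (\<forall>i\<le>n. (\<Sum>r\<le>n. a i r * h r) = \<mu> * h i)
      \<longrightarrow> (\<exists>l\<in>{1..k}. (\<Sum>r\<le>n. a (n + l) r * h r) \<noteq> 0)"
    proof (intro allI impI, elim conjE, rule ccontr)
      fix h :: "nat \<Rightarrow> complex" and \<mu>
      assume \<mu>: "\<mu> \<noteq> 0" and hr: "\<exists>r\<le>n. h r \<noteq> 0" and eig: "\<forall>i\<le>n. (\<Sum>r\<le>n. a i r * h r) = \<mu> * h i"
        and nl: "\<not> (\<exists>l\<in>{1..k}. (\<Sum>r\<le>n. a (n + l) r * h r) \<noteq> 0)"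
      define x where "x = (\<lambda>m. \<Sum>r\<le>n. h r * e r m)"
      have xl: "x \<in> l2" unfolding x_def by (simp add: l2_sum el)
      have xnz: "x \<noteq> vzero"
      proof
        assume "x = vzero"
        obtain r where r: "r \<le> n" "h r \<noteq> 0" using hr by blast
        have "l2inner x (e r) = h r" unfolding x_def using r el
          by (simp add: inner_sum_left orth if_distrib cong: if_cong)
        moreover have "l2inner vzero (e r) = 0" by (simp add: l2inner_def vzero_def)
        ultimately show False using r \<open>x = vzero\<close> by simp
      qed
      have "T x = (\<lambda>m. \<Sum>r\<le>n. h r * T (e r) m)" unfolding x_def by (rule op_sum[OF bl]) (auto simp: el)
      also have "\<dots> = (\<lambda>m. \<Sum>r\<le>n. h r * (\<Sum>i\<le>n + k. a i r * e i m))" using Te1 by simp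
      also have "\<dots> = (\<lambda>m. \<Sum>i\<le>n + k. (\<Sum>r\<le>n. a i r * h r) * e i m)"
        by (intro ext) (simp add: sum_distrib_left sum_distrib_right mult_ac sum.swap[of _ "{..n}"])
      also have "\<dots> = (\<lambda>m. \<Sum>i\<le>n. (\<Sum>r\<le>n. a i r * h r) * e i m)"
      proof (intro ext)
        fix m
        have "(\<Sum>i\<le>n + k. (\<Sum>r\<le>n. a i r * h r) * e i m) =
            (\<Sum>i\<le>n. (\<Sum>r\<le>n. a i r * h r) * e i m) + (\<Sum>i\<in>{n + 1..n + k}. (\<Sum>r\<le>n. a i r * h r) * e i m)"
          using sum.ub_add_nat[of 0 n "\<lambda>i. (\<Sum>r\<le>n. a i r * h r) * e i m" k] by (simp add: atLeast0AtMost)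
        moreover have "(\<Sum>i\<in>{n + 1..n + k}. (\<Sum>r\<le>n. a i r * h r) * e i m) = 0"
        proof (rule sum.neutral, rule ballI)
          fix i assume i: "i \<in> {n + 1..n + k}"
          hence "i - n \<in> {1..k}" "n + (i - n) = i" by auto
          hence "(\<Sum>r\<le>n. a (n + (i - n)) r * h r) = 0" using nl by blast
          thus "(\<Sum>r\<le>n. a i r * h r) * e i m = 0" using \<open>n + (i - n) = i\<close> by simp
        qed
        ultimately show "(\<Sum>i\<le>n + k. (\<Sum>r\<le>n. a i r * h r) * e i m) = (\<Sum>i\<le>n. (\<Sum>r\<le>n. a i r * h r) * e i m)" by simp
      qed
      also have "\<dots> = vscale \<mu> x" unfolding x_def vscale_def using eig
        by (intro ext) (simp add: sum_distrib_left mult.assoc)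
      finally have "has_eigenvalue T \<mu>" unfolding has_eigenvalue_def using xl xnz by blast
      thus False using noeig \<mu> by blast
    qed
  next
    assume cond: "\<forall>h :: nat \<Rightarrow> complex. \<forall>\<mu>. \<mu> \<noteq> 0 \<and> (\<exists>r\<le>n. h r \<noteq> 0) \<and>
        (\<forall>i\<le>n. (\<Sum>r\<le>n. a i r * h r) = \<mu> * h i)
      \<longrightarrow> (\<exists>l\<in>{1..k}. (\<Sum>r\<le>n. a (n + l) r * h r) \<noteq> 0)"
    show "\<forall>c. c \<noteq> 0 \<longrightarrow> \<not> has_eigenvalue T c"
    proof (intro allI impI notI)
      fix lam assume lam: "lam \<noteq> 0" and "has_eigenvalue T lam"
      then obtain x where xl: "x \<in> l2" and xnz: "x \<noteq> vzero" and Tx: "T x = vscale lam x"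
        unfolding has_eigenvalue_def by blast
      define c where "c j = l2inner x (e j)" for j
      have cT: "l2inner (T x) (e m) = lam * c m" for m unfolding Tx c_def using xl el by (simp add: inner_scale_left)
      have CA: "lam * c m = (\<Sum>j\<le>n. a m j * c j)" if "m \<le> n + k" for m
        using TA[OF xl that] cT unfolding c_def by simp
      have CB: "lam * c m = c (m - k)" if "m \<ge> n + k + 1" for m
        using TB[OF xl that] cT unfolding c_def by simp
      have xpos: "l2norm x > 0" using l2norm_nonneg[OF xl] l2norm_zero[OF xl] xnz by force
      have "cmod lam * l2norm x \<le> l2norm x" using cn[OF xl] Tx l2norm_scale[OF xl] by simp
      hence lam1: "cmod lam \<le> 1" using xpos by simp
      have tailp: "c p = 0" if p: "p \<in> {n + 1..n + k}" for p
      proof (rule ccontr)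
        assume cp: "c p \<noteq> 0"
        have grow: "cmod (c p) \<le> cmod (c (p + j * k))" for j
        proof (induction j)
          case 0 then show ?case by simp
        next
          case (Suc j)
          have "p + Suc j * k \<ge> n + k + 1" using p by auto
          from CB[OF this] have "lam * c (p + Suc j * k) = c (p + j * k)" by simp
          hence "cmod (c (p + j * k)) = cmod lam * cmod (c (p + Suc j * k))" by (metis norm_mult)
          also have "\<dots> \<le> cmod (c (p + Suc j * k))" using lam1 by (simp add: mult_left_le_one_le)
          finally show ?case using Suc by simp
        qed
        define \<delta> where "\<delta> = (cmod (c p))\<^sup>2"
        have \<delta>: "\<delta> > 0" using cp by (simp add: \<delta>_def)
        obtain N :: nat where N: "(l2norm x)\<^sup>2 < of_nat N * \<delta>" using ex_less_of_nat_mult[OF \<delta>] by blast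
        have inj: "inj_on (\<lambda>j. p + j * k) {..<N}" using k1 by (auto simp: inj_on_def)
        have "of_nat N * \<delta> = (\<Sum>j<N. \<delta>)" by simp
        also have "\<dots> \<le> (\<Sum>j<N. (cmod (c (p + j * k)))\<^sup>2)"
          unfolding \<delta>_def by (intro sum_mono power_mono grow) simp
        also have "\<dots> = (\<Sum>m\<in>(\<lambda>j. p + j * k) ` {..<N}. (cmod (c m))\<^sup>2)"
          by (simp add: sum.reindex[OF inj])
        also have "\<dots> \<le> (l2norm x)\<^sup>2" unfolding c_def by (rule bessel[OF onb xl]) simp
        finally show False using N by simp
      qed
      have tail: "c m = 0" if "m \<ge> n + 1" for m
        using that
      proof (induction m rule: less_induct)
        case (less m)
        show ?case
        proof (cases "m \<le> n + k")
          case True thus ?thesis using tailp less.prems by simp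
        next
          case False
          hence "lam * c m = c (m - k)" using CB by simp
          moreover have "c (m - k) = 0" using less.IH[of "m - k"] False k1 by simp
          ultimately show ?thesis using lam by simp
        qed
      qed
      have hr: "\<exists>r\<le>n. c r \<noteq> 0"
      proof (rule ccontr)
        assume "\<not> (\<exists>r\<le>n. c r \<noteq> 0)"
        hence "l2inner x (e j) = 0" for j using tail unfolding c_def by (cases "j \<le> n") auto
        thus False using complete0[OF onb xl] xnz by blast
      qed
      have eig: "\<forall>i\<le>n. (\<Sum>r\<le>n. a i r * c r) = lam * c i" using CA by simp
      obtain l where l: "l \<in> {1..k}" "(\<Sum>r\<le>n. a (n + l) r * c r) \<noteq> 0"
        using cond lam hr eig by blast
      have "(\<Sum>r\<le>n. a (n + l) r * c r) = lam * c (n + l)" using CA[of "n + l"] l by simp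
      also have "\<dots> = 0" using tail[of "n + l"] l by simp
      finally show False using l by simp
    qed
  qed
qed

end
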